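(* Assume $E$ is countable and let $\gamma$ be a POS. Then for every $\Delta\in\mathcal T_b$, every $\eta\in\Omega$ and every $\sigma\in\Omega$, $$\gamma_\Delta\bigl(\{\zeta:\zeta_\Delta=\sigma_\Delta\}\bigm|\eta\bigr)=\prod_{x\in\Delta}\gamma_x\bigl(\sigma_x\bigm|\sigma_\Delta\eta_{\Delta_-\cup\Delta^*}\bigr),$$ where $\sigma_\Delta\eta_{\Delta_-\cup\Delta^*}$ denotes any configuration equal to $\sigma$ on $\Delta$ and to $\eta$ on $\Delta_-\cup\Delta^*$.
   Context: $(S,\le)$ is a countable partially ordered set. For $x\in S$ write $x_-=\{y\in S:y<x\}$, $x_+=\{y\in S:y>x\}$. For $\Upsilon\subset S$: $\max(\Upsilon)=\{x\in\Upsilon: y\notin\Upsilon\text{ for all }y>x\}$, $\min(\Upsilon)=\{x\in\Upsilon: y\notin\Upsilon\text{ for all }y<x\}$, the past $\Upsilon_-=\{x\in S\setminus\Upsilon:\exists y\in\Upsilon,\ x<y\}$, the future $\Upsilon_+=\{x\in S\setminus\Upsilon:\exists y\in\Upsilon,\ x>y\}$, and the outer time $\Upsilon^*=\{x\in S: x\text{ is comparable with no }y\in\Upsilon\}$. Standing assumptions: for every $x\in S$, $\max(x_-)$ and $\min(x_+)$ are finite, every $y<x$ satisfies $y\le y_0<x$ for some $y_0\in\max(x_-)$, every $z>x$ satisfies $z\ge z_0>x$ for some $z_0\in\min(x_+)$; and $S$ has no minimal element. A finite set $\Lambda\subset S$ is a time box if $\Lambda_-\cap\Lambda_+=\emptyset$;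 $\mathcal T_b$ is the set of time boxes. $\Omega=E^S$ with product $\sigma$-algebra $\mathcal F$; $\mathcal F_\Upsilon$ is generated by coordinates in $\Upsilon$. A proper oriented kernel on $\Lambda\in\mathcal T_b$ is a map $\gamma_\Lambda:\mathcal F_{S\setminus\Lambda_+}\times\Omega\to[0,1]$ such that (a) $\gamma_\Lambda(\cdot,\omega)$ is a probability measure; (b) $\gamma_\Lambda(A,\cdot)$ is $\mathcal F_{\Lambda_-\cup\Lambda^*}$-measurable for $A\in\mathcal F_{S\setminus\Lambda_+}$; (c) $\gamma_\Lambda(A,\cdot)$ is $\mathcal F_{\Lambda_-}$-measurable for $A\in\mathcal F_\Lambda$; (d) $\gamma_\Lambda(B,\omega)=\mathbf 1_B(\omega)$ for $B\in\mathcal F_{\Lambda_-\cup\Lambda^*}$. A POS is a family $\gamma=(\gamma_\Lambda)_{\Lambda\in\mathcal T_b}$ of proper oriented kernels with $\gamma_\Delta\gamma_\Lambda=\gamma_\Delta$ on $\mathcal F_{S\setminus\Lambda_+}$ whenever $\Lambda\subset\Delta$ are time boxes, where $(\gamma_\Delta\gamma_\Lambda)(f\mid\omega)=\int\gamma_\Lambda(f\mid\sigma)\gamma_\Delta(d\sigma,\omega)$. We write $\gamma_x=\gamma_{\{x\}}$ and $\gamma_x(a\mid\omega)=\gamma_x(\{\zeta:\zeta_x=a\},\omega)$. *)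

theory Defs
  imports "HOL-Analysis.Analysis"
begin

text \<open>The countable poset S is the type 's (class order, countable);
 the countable state space E is the type 'e; configurations Omega = 's => 'e.\<close>

definition maxset :: "('s::order) set \<Rightarrow> 's set" where
  "maxset U = {x \<in> U. \<forall>y. x < y \<longrightarrow> y \<notin> U}"

definition minset :: "('s::order) set \<Rightarrow> 's set" where
  "minset U = {x \<in> U. \<forall>y. y < x \<longrightarrow> y \<notin> U}"

definition below :: "('s::order) \<Rightarrow> 's set" where
  "below x = {y. y < x}"

definition above :: "('s::order) \<Rightarrow> 's set" where
  "above x = {y. y > x}"

definition standing_assms :: "('s::{order,countable}) itself \<Rightarrow> bool" where
  "standing_assms _ \<longleftrightarrow>
     (\<forall>x::'s. finite (maxset (below x)) \<and> finite (minset (above x))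
        \<and> (\<forall>y. y < x \<longrightarrow> (\<exists>y0\<in>maxset (below x). y \<le> y0 \<and> y0 < x))
        \<and> (\<forall>z. z > x \<longrightarrow> (\<exists>z0\<in>minset (above x). z \<ge> z0 \<and> z0 > x)))
     \<and> (\<forall>x::'s. \<exists>y. y < x)"

definition past :: "('s::order) set \<Rightarrow> 's set" where
  "past U = {x. x \<notin> U \<and> (\<exists>y\<in>U. x < y)}"

definition future :: "('s::order) set \<Rightarrow> 's set" where
  "future U = {x. x \<notin> U \<and> (\<exists>y\<in>U. y < x)}"

definition outer :: "('s::order) set \<Rightarrow> 's set" where
  "outer U = {x. \<forall>y\<in>U. \<not> (x \<le> y) \<and> \<not> (y \<le> x)}"

definition time_box :: "('s::order) set \<Rightarrow> bool" where
  "time_box L \<longleftrightarrow> finite L \<and> past L \<inter> future L = {}"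

text \<open>Generators of F_U: cylinder sets on coordinates in U (E carries the discrete sigma-algebra).\<close>
definition gen :: "'s set \<Rightarrow> ('s \<Rightarrow> 'e) set set" where
  "gen U = {{\<omega>. \<omega> x \<in> A} | x A. x \<in> U}"

definition Fsig :: "'s set \<Rightarrow> ('s \<Rightarrow> 'e) set set" where
  "Fsig U = sigma_sets UNIV (gen U)"

definition FM :: "'s set \<Rightarrow> ('s \<Rightarrow> 'e) measure" where
  "FM U = sigma UNIV (gen U)"

type_synonym ('s, 'e) kernel = "('s \<Rightarrow> 'e) set \<Rightarrow> ('s \<Rightarrow> 'e) \<Rightarrow> real"

definition proper_oriented_kernel :: "('s::order) set \<Rightarrow> ('s, 'e) kernel \<Rightarrow> bool" where
  "proper_oriented_kernel L g \<longleftrightarrow>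
     (\<forall>\<omega>. measure_space UNIV (Fsig (- future L)) (\<lambda>A. ennreal (g A \<omega>))
          \<and> (\<forall>A\<in>Fsig (- future L). 0 \<le> g A \<omega>) \<and> g UNIV \<omega> = 1)
   \<and> (\<forall>A\<in>Fsig (- future L). g A \<in> borel_measurable (FM (past L \<union> outer L)))
   \<and> (\<forall>A\<in>Fsig L. g A \<in> borel_measurable (FM (past L)))
   \<and> (\<forall>B\<in>Fsig (past L \<union> outer L). \<forall>\<omega>. g B \<omega> = indicator B \<omega>)"

definition kmeasure :: "('s::order) set \<Rightarrow> ('s, 'e) kernel \<Rightarrow> ('s \<Rightarrow> 'e) \<Rightarrow> ('s \<Rightarrow> 'e) measure" where
  "kmeasure L g \<omega> = measure_of UNIV (Fsig (- future L)) (\<lambda>A. ennreal (g A \<omega>))"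

definition kcomp :: "('s::order) set \<Rightarrow> ('s, 'e) kernel \<Rightarrow> ('s, 'e) kernel
                     \<Rightarrow> ('s \<Rightarrow> 'e) set \<Rightarrow> ('s \<Rightarrow> 'e) \<Rightarrow> ennreal" where
  "kcomp D gD gL A \<omega> = (\<integral>\<^sup>+ s. ennreal (gL A s) \<partial>(kmeasure D gD \<omega>))"

definition POS :: "('s::order set \<Rightarrow> ('s, 'e) kernel) \<Rightarrow> bool" where
  "POS g \<longleftrightarrow>
     (\<forall>L. time_box L \<longrightarrow> proper_oriented_kernel L (g L))
   \<and> (\<forall>L D. time_box L \<and> time_box D \<and> L \<subseteq> D \<longrightarrow>
        (\<forall>A \<in> Fsig (- future L) \<inter> Fsig (- future D). \<forall>\<omega>.
            kcomp D (g D) (g L) A \<omega> = ennreal (g D A \<omega>)))"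

end

theory Submission
  imports Defs
begin

lemma Fsig_mono: "U \<subseteq> V \<Longrightarrow> Fsig U \<subseteq> Fsig V"
  unfolding Fsig_def by (rule sigma_sets_mono') (auto simp: gen_def)

lemma sets_FM: "sets (FM U) = Fsig U"
  unfolding FM_def Fsig_def by (rule sets_measure_of) auto

lemma space_FM: "space (FM U) = UNIV"
  unfolding FM_def by (simp add: space_measure_of_conv)

lemma coord_in: "y \<in> U \<Longrightarrow> {\<zeta>. \<zeta> y \<in> C} \<in> Fsig U"
  unfolding Fsig_def gen_def by (rule sigma_sets.Basic) blast

lemma Fsig_compl: "X \<in> Fsig U \<Longrightarrow> - X \<in> Fsig U"
  unfolding Fsig_def using sigma_sets.Compl[of X UNIV "gen U"] by (simp add: Compl_eq_Diff_UNIV)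

lemma cyl_in:
  assumes "finite L" "L \<subseteq> U"
  shows "{\<zeta>. \<forall>y\<in>L. \<zeta> y = \<sigma> y} \<in> Fsig U"
proof -
  have "{\<zeta>\<in>space (FM U). \<forall>y\<in>L. \<zeta> y = \<sigma> y} \<in> sets (FM U)"
    apply (rule sets.sets_Collect_finite_All[OF _ assms(1)])
    using coord_in[of _ U "{\<sigma> _}"] assms(2) by (auto simp: sets_FM space_FM)
  then show ?thesis by (simp add: sets_FM space_FM)
qed

lemma Fsig_det:
  assumes "X \<in> Fsig U" "\<forall>y\<in>U. s y = t y"
  shows "s \<in> X \<longleftrightarrow> t \<in> X"
  using assms(1) unfolding Fsig_def
proof (induction rule: sigma_sets.induct)
  case (Basic a) then show ?case using assms(2) by (auto simp: gen_def)
qed auto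

lemma meas_det:
  fixes f :: "_ \<Rightarrow> real"
  assumes "f \<in> borel_measurable (FM U)" "\<forall>y\<in>U. s y = t y"
  shows "f s = f t"
proof -
  have "f -` {f s} \<inter> space (FM U) \<in> sets (FM U)"
    by (rule measurable_sets[OF assms(1) borel_closed[OF closed_singleton]])
  then have "f -` {f s} \<in> Fsig U" by (simp add: sets_FM space_FM)
  from Fsig_det[OF this assms(2)] show ?thesis by simp
qed

lemma pok: "POS g \<Longrightarrow> time_box L \<Longrightarrow> proper_oriented_kernel L (g L)"
  unfolding POS_def by blast

lemma kmeas:
  fixes g :: "('s::order) set \<Rightarrow> ('s,'e) kernel"
  assumes "POS g" "time_box L"
  shows "sets (kmeasure L (g L) \<omega>) = Fsig (- future L)"
    and "space (kmeasure L (g L) \<omega>) = UNIV"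
    and "X \<in> Fsig (- future L) \<Longrightarrow> emeasure (kmeasure L (g L) \<omega>) X = ennreal (g L X \<omega>)"
proof -
  have ms: "measure_space UNIV (Fsig (- future L)) (\<lambda>A. ennreal (g L A \<omega>))"
    using pok[OF assms] unfolding proper_oriented_kernel_def by blast
  then have sa: "sigma_algebra UNIV (Fsig (- future L) :: ('s \<Rightarrow> 'e) set set)" by (simp add: measure_space_def)
  show "sets (kmeasure L (g L) \<omega>) = Fsig (- future L)"
    unfolding kmeasure_def using sets_measure_of[of "Fsig (- future L)" UNIV]
    sigma_algebra.sigma_sets_eq[OF sa] by simp
  show "space (kmeasure L (g L) \<omega>) = UNIV"
    unfolding kmeasure_def by (simp add: space_measure_of_conv)
  show "X \<in> Fsig (- future L) \<Longrightarrow> emeasure (kmeasure L (g L) \<omega>) X = ennreal (g L X \<omega>)"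
    unfolding kmeasure_def using ms
    by (intro emeasure_measure_of_sigma) (auto simp: measure_space_def)
qed

lemma tb_sub: "time_box L \<Longrightarrow> past L \<union> outer L \<subseteq> - future L"
  unfolding time_box_def past_def future_def outer_def by auto

lemma self_sub: "L \<subseteq> - future L"
  unfolding future_def by auto

lemma g_nonneg: "POS g \<Longrightarrow> time_box L \<Longrightarrow> X \<in> Fsig (- future L) \<Longrightarrow> 0 \<le> g L X \<omega>"
  using pok unfolding proper_oriented_kernel_def by blast

lemma g_ind: "POS g \<Longrightarrow> time_box L \<Longrightarrow> X \<in> Fsig (past L \<union> outer L) \<Longrightarrow> g L X \<omega> = indicator X \<omega>"
  using pok unfolding proper_oriented_kernel_def by blast

lemma kernel_fact:
  fixes g :: "('s::order) set \<Rightarrow> ('s,'e) kernel"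
  assumes P: "POS g" and tb: "time_box L"
    and A: "A \<in> Fsig (past L \<union> outer L)" and B: "B \<in> Fsig (- future L)"
  shows "g L (A \<inter> B) s = (if s \<in> A then g L B s else 0)"
proof -
  let ?\<nu> = "kmeasure L (g L) s"
  have A': "A \<in> Fsig (- future L)" using A Fsig_mono[OF tb_sub[OF tb]] by blast
  have nA: "- A \<in> Fsig (past L \<union> outer L)" using Fsig_compl[OF A] .
  have nA': "- A \<in> Fsig (- future L)" using nA Fsig_mono[OF tb_sub[OF tb]] by blast
  have sa: "sigma_algebra UNIV (Fsig (- future L) :: ('s \<Rightarrow> 'e) set set)"
    using pok[OF P tb] unfolding proper_oriented_kernel_def measure_space_def by blast
  have AB: "A \<inter> B \<in> Fsig (- future L)"
    using sets.Int[of A ?\<nu> B] kmeas(1)[OF P tb] A' B by simp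
  show ?thesis
  proof (cases "s \<in> A")
    case True
    have "emeasure ?\<nu> (- A) = 0"
      using kmeas(3)[OF P tb nA'] g_ind[OF P tb nA, of s] True by simp
    then have "- A \<in> null_sets ?\<nu>" using nA' kmeas(1)[OF P tb] by (auto intro: null_setsI)
    from emeasure_Diff_null_set[OF this, of B] have "emeasure ?\<nu> (B - - A) = emeasure ?\<nu> B"
      using B kmeas(1)[OF P tb] by simp
    moreover have "B - - A = A \<inter> B" by auto
    ultimately have "ennreal (g L (A \<inter> B) s) = ennreal (g L B s)"
      using kmeas(3)[OF P tb AB] kmeas(3)[OF P tb B] by simp
    then show ?thesis using True g_nonneg[OF P tb AB] g_nonneg[OF P tb B] by simp
  next
    case False
    have "emeasure ?\<nu> A = 0"
      using kmeas(3)[OF P tb A'] g_ind[OF P tb A, of s] False by simp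
    moreover have "emeasure ?\<nu> (A \<inter> B) \<le> emeasure ?\<nu> A"
      by (rule emeasure_mono) (use A' kmeas(1)[OF P tb] in auto)
    ultimately have "ennreal (g L (A \<inter> B) s) = 0"
      using kmeas(3)[OF P tb AB] by simp
    then show ?thesis using False g_nonneg[OF P tb AB, of s] by simp
  qed
qed

lemma tb_single: "time_box {x}"
  unfolding time_box_def past_def future_def by auto

lemma AE_past:
  fixes g :: "('s::{order,countable}) set \<Rightarrow> ('s,'e) kernel"
  assumes P: "POS g" and tb: "time_box D"
  shows "AE s in kmeasure D (g D) \<eta>. \<forall>y\<in>past D. s y = \<eta> y"
proof -
  let ?\<mu> = "kmeasure D (g D) \<eta>"
  have "\<forall>y\<in>past D. AE s in ?\<mu>. s y = \<eta> y"
  proof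
    fix y assume y: "y \<in> past D"
    define C where "C = - {s::'s \<Rightarrow> 'e. s y \<in> {\<eta> y}}"
    have C: "C \<in> Fsig (past D \<union> outer D)" unfolding C_def
      by (rule Fsig_compl, rule coord_in) (use y in auto)
    have C': "C \<in> Fsig (- future D)" using C Fsig_mono[OF tb_sub[OF tb]] by blast
    have "emeasure ?\<mu> C = 0"
      using kmeas(3)[OF P tb C'] g_ind[OF P tb C, of \<eta>] by (simp add: C_def)
    then have "C \<in> null_sets ?\<mu>" using C' kmeas(1)[OF P tb] by (auto intro: null_setsI)
    then show "AE s in ?\<mu>. s y = \<eta> y"
      by (rule AE_I') (auto simp: C_def)
  qed
  then show ?thesis by (subst AE_ball_countable) (auto intro: countableI_type)
qed

lemma main_lemma:
  fixes g :: "('s::{order,countable}) set \<Rightarrow> ('s,'e) kernel"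
  assumes P: "POS g"
  shows "time_box D \<Longrightarrow> \<forall>y\<in>D. \<xi> y = \<sigma> y \<Longrightarrow> \<forall>y\<in>past D \<union> outer D. \<xi> y = \<eta> y
    \<Longrightarrow> g D {\<zeta>. \<forall>x\<in>D. \<zeta> x = \<sigma> x} \<eta> = (\<Prod>x\<in>D. g {x} {\<zeta>. \<zeta> x = \<sigma> x} \<xi>)"
proof (induction "card D" arbitrary: D \<eta> \<sigma> \<xi> rule: less_induct)
  case less
  have tbD: "time_box D" by fact
  have finD: "finite D" using tbD by (simp add: time_box_def)
  show ?case
  proof (cases "D = {}")
    case True
    then show ?thesis using pok[OF P less.prems(1)] unfolding proper_oriented_kernel_def by simp
  next
    case False
    obtain x where x: "x \<in> D" "\<forall>b\<in>D. x \<le> b \<longrightarrow> x = b"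
      using finite_has_maximal[OF finD False] by blast
    define L where "L = D - {x}"
    have finL: "finite L" using finD by (simp add: L_def)
    have tbL: "time_box L"
      unfolding time_box_def
    proof
      show "finite L" by fact
      show "past L \<inter> future L = {}"
      proof (rule ccontr)
        assume "past L \<inter> future L \<noteq> {}"
        then obtain z y1 y2 where z: "z \<notin> L" "y1 \<in> L" "z < y1" "y2 \<in> L" "y2 < z"
          unfolding past_def future_def by blast
        show False
        proof (cases "z = x")
          case True then show ?thesis using x z by (auto simp: L_def)
        next
          case False
          then have "z \<in> past D \<inter> future D" using z unfolding past_def future_def L_def by auto
          then show ?thesis using tbD unfolding time_box_def by blast
        qed
      qed
    qed
    have tbx: "time_box {x}" by (rule tb_single)
    have cardL: "card L < card D" using finD x(1) unfolding L_def by (meson card_Diff1_less)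
    have pastL: "past L \<subseteq> past D"
      unfolding past_def L_def using x by auto
    define A where "A = {\<zeta>::'s\<Rightarrow>'e. \<forall>y\<in>L. \<zeta> y = \<sigma> y}"
    define B where "B = {\<zeta>::'s\<Rightarrow>'e. \<zeta> x = \<sigma> x}"
    have AB: "{\<zeta>. \<forall>y\<in>D. \<zeta> y = \<sigma> y} = A \<inter> B"
      using x(1) by (auto simp: A_def B_def L_def)
    have IH: "g L A \<xi> = (\<Prod>y\<in>L. g {y} {\<zeta>. \<zeta> y = \<sigma> y} \<xi>)"
      unfolding A_def
      by (rule less.hyps[OF cardL tbL]) (use less.prems(2) in \<open>auto simp: L_def\<close>)
    let ?\<mu> = "kmeasure D (g D) \<eta>"
    have AEp: "AE s in ?\<mu>. \<forall>y\<in>past D. s y = \<xi> y"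
      using AE_past[OF P tbD, of \<eta>] less.prems(3) by auto
    have A_L: "A \<in> Fsig L" unfolding A_def by (rule cyl_in[OF finL]) simp
    have LD: "L \<subseteq> D" by (auto simp: L_def)
    have A_fL: "A \<in> Fsig (- future L)" using A_L Fsig_mono[OF self_sub] by blast
    have A_fD: "A \<in> Fsig (- future D)" using A_L Fsig_mono[of L "- future D"] self_sub[of D] LD by blast
    have posA: "\<And>\<omega>. 0 \<le> g L A \<omega>" using g_nonneg[OF P tbL A_fL] .
    have posAD: "0 \<le> g D A \<eta>" using g_nonneg[OF P tbD A_fD] .
    have cons: "\<And>L' X. time_box L' \<Longrightarrow> L' \<subseteq> D \<Longrightarrow> X \<in> Fsig (- future L') \<Longrightarrow> X \<in> Fsig (- future D) \<Longrightarrow>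
        kcomp D (g D) (g L') X \<eta> = ennreal (g D X \<eta>)"
      using P tbD unfolding POS_def by blast
    have step1: "g D A \<eta> = g L A \<xi>"
    proof -
      have "ennreal (g D A \<eta>) = (\<integral>\<^sup>+ s. ennreal (g L A s) \<partial>?\<mu>)"
        using cons[OF tbL LD A_fL A_fD] by (simp add: kcomp_def)
      also have "\<dots> = (\<integral>\<^sup>+ s. ennreal (g L A \<xi>) \<partial>?\<mu>)"
      proof (rule nn_integral_cong_AE)
        show "AE s in ?\<mu>. ennreal (g L A s) = ennreal (g L A \<xi>)"
          using AEp
        proof eventually_elim
          case (elim s)
          have "g L A \<in> borel_measurable (FM (past L))"
            using pok[OF P tbL] A_L unfolding proper_oriented_kernel_def by blast
          moreover have "\<forall>y\<in>past L. s y = \<xi> y" using elim pastL by blast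
          ultimately have "g L A s = g L A \<xi>" by (rule meas_det)
          then show ?case by simp
        qed
      qed
      also have "\<dots> = ennreal (g L A \<xi>)"
        using kmeas(2)[OF P tbD, of \<eta>] kmeas(3)[OF P tbD, of UNIV \<eta>] pok[OF P tbD]
        unfolding proper_oriented_kernel_def by (simp add: Fsig_def sigma_sets_top)
      finally show ?thesis using posA posAD by simp
    qed
    have B_x: "B \<in> Fsig {x}" unfolding B_def using coord_in[of x "{x}" "{\<sigma> x}"] by simp
    have B_fx: "B \<in> Fsig (- future {x})" using B_x Fsig_mono[OF self_sub] by blast
    have L_px: "L \<subseteq> past {x} \<union> outer {x}"
      using x unfolding L_def past_def outer_def by (auto simp: order.order_iff_strict)
    have A_px: "A \<in> Fsig (past {x} \<union> outer {x})" unfolding A_def by (rule cyl_in[OF finL L_px])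
    have D_fx: "D \<subseteq> - future {x}" using x unfolding future_def by auto
    have AB_fx: "A \<inter> B \<in> Fsig (- future {x})"
      unfolding AB[symmetric] by (rule cyl_in[OF finD D_fx])
    have AB_fD: "A \<inter> B \<in> Fsig (- future D)"
      unfolding AB[symmetric] by (rule cyl_in[OF finD self_sub])
    have xD: "{x} \<subseteq> D" using x by auto
    have step2: "ennreal (g D (A \<inter> B) \<eta>) = ennreal (g {x} B \<xi>) * ennreal (g D A \<eta>)"
    proof -
      have "ennreal (g D (A \<inter> B) \<eta>) = (\<integral>\<^sup>+ s. ennreal (g {x} (A \<inter> B) s) \<partial>?\<mu>)"
        using cons[OF tbx xD AB_fx AB_fD] by (simp add: kcomp_def)
      also have "\<dots> = (\<integral>\<^sup>+ s. ennreal (g {x} B \<xi>) * indicator A s \<partial>?\<mu>)"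
      proof (rule nn_integral_cong_AE)
        show "AE s in ?\<mu>. ennreal (g {x} (A \<inter> B) s) = ennreal (g {x} B \<xi>) * indicator A s"
          using AEp
        proof eventually_elim
          case (elim s)
          show ?case
          proof (cases "s \<in> A")
            case True
            have "\<forall>y\<in>past {x}. s y = \<xi> y"
            proof
              fix y assume y: "y \<in> past {x}"
              show "s y = \<xi> y"
              proof (cases "y \<in> D")
                case True
                then have "y \<in> L" using y by (auto simp: L_def past_def)
                then show ?thesis using \<open>s \<in> A\<close> less.prems(2) True by (auto simp: A_def)
              next
                case False
                then have "y \<in> past D" using y x(1) by (auto simp: past_def)
                then show ?thesis using elim by auto
              qed
            qed
            moreover have "g {x} B \<in> borel_measurable (FM (past {x}))"
              using pok[OF P tbx] B_x unfolding proper_oriented_kernel_def by blast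
            ultimately have "g {x} B s = g {x} B \<xi>" using meas_det by blast
            then show ?thesis using kernel_fact[OF P tbx A_px B_fx, of s] True by simp
          next
            case False
            then show ?thesis using kernel_fact[OF P tbx A_px B_fx, of s] by simp
          qed
        qed
      qed
      also have "\<dots> = ennreal (g {x} B \<xi>) * emeasure ?\<mu> A"
        by (rule nn_integral_cmult_indicator) (use A_fD kmeas(1)[OF P tbD] in simp)
      also have "\<dots> = ennreal (g {x} B \<xi>) * ennreal (g D A \<eta>)"
        using kmeas(3)[OF P tbD A_fD] by simp
      finally show ?thesis .
    qed
    have posB: "0 \<le> g {x} B \<xi>" using g_nonneg[OF P tbx B_fx] .
    have posABD: "0 \<le> g D (A \<inter> B) \<eta>" using g_nonneg[OF P tbD AB_fD] .
    have "g D (A \<inter> B) \<eta> = g {x} B \<xi> * g D A \<eta>"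
      using step2 posB posAD posABD by (simp add: ennreal_mult[symmetric])
    also have "\<dots> = g {x} B \<xi> * (\<Prod>y\<in>L. g {y} {\<zeta>. \<zeta> y = \<sigma> y} \<xi>)"
      using step1 IH by simp
    also have "\<dots> = (\<Prod>y\<in>D. g {y} {\<zeta>. \<zeta> y = \<sigma> y} \<xi>)"
      using prod.remove[OF finD x(1), of "\<lambda>y. g {y} {\<zeta>. \<zeta> y = \<sigma> y} \<xi>"] by (simp add: L_def B_def)
    finally show ?thesis using AB by simp
  qed
qed

theorem mainTheorem18:
  fixes g :: "('s::{order,countable}) set \<Rightarrow> ('s, 'e::countable) kernel"
    and D :: "'s set" and \<eta> \<sigma> \<xi> :: "'s \<Rightarrow> 'e"
  assumes "standing_assms TYPE('s)"
    and "POS g"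
    and "time_box D"
    and "\<forall>y\<in>D. \<xi> y = \<sigma> y"
    and "\<forall>y\<in>past D \<union> outer D. \<xi> y = \<eta> y"
  shows "g D {\<zeta>. \<forall>x\<in>D. \<zeta> x = \<sigma> x} \<eta>
           = (\<Prod>x\<in>D. g {x} {\<zeta>. \<zeta> x = \<sigma> x} \<xi>)"
  using main_lemma[OF assms(2) assms(3-5)] .

end
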